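(* Let $c\ge2$, let $\Gamma$ be a $c$-uniform unoriented hypergraph with $E\neq\varnothing$ and no isolated vertices, with smallest normalized Laplacian eigenvalue $\lambda_1$, and let $q\in[0,c-1]$ be real. Then \[ \chi^{q\text{-t}}(\Gamma)\;\ge\;\frac{c-\lambda_1}{q+1-\lambda_1}. \] Moreover, the bound is sharp: whenever $q$ is an integer with $(q+1)\mid c$, there exists a $c$-uniform unoriented hypergraph attaining equality.
   Context: A hypergraph has finite vertex set $V$ and edge set $E\subseteq\mathcal P(V)$; it is $c$-uniform if $|e|=c$ for all $e$, and unoriented means all incidences have orientation $+1$. $\deg v=|\{e\in E: v\in e\}|\ge1$, $D=\mathrm{diag}(\deg v)$, adjacency $A_{v,v}=0$ and $A_{v,w}=-|\{e\in E: v,w\in e\}|$ for $v\ne w$, normalized Laplacian $L=\mathrm{Id}-D^{-1}A$ with eigenvalues $\lambda_1\le\dots\le\lambda_N$. For $q\in[0,c-1]$, a $k$-coloring $V\to\{1,\dots,k\}$ with color classes $V_1,\dots,V_k$ is $q$-tailored if for all $i$ and all $v\in V_i$, $\sum_{w\in V_i}|A_{v,w}|\le q\deg v$; $\chi^{q\text{-t}}(\Gamma)$ is the least $k$ admitting a $q$-tailored $k$-coloring. *)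

theory Defs
  imports Main Complex_Main
begin

definition hdeg :: "'a set set \<Rightarrow> 'a \<Rightarrow> nat" where
  "hdeg E v = card {e \<in> E. v \<in> e}"

definition hadj :: "'a set set \<Rightarrow> 'a \<Rightarrow> 'a \<Rightarrow> real" where
  "hadj E v w = (if v = w then 0 else - real (card {e \<in> E. v \<in> e \<and> w \<in> e}))"

definition hlap :: "'a set set \<Rightarrow> 'a \<Rightarrow> 'a \<Rightarrow> real" where
  "hlap E v w = (if v = w then 1 else 0) - hadj E v w / real (hdeg E v)"

definition is_lap_eigenvalue :: "'a set \<Rightarrow> 'a set set \<Rightarrow> real \<Rightarrow> bool" where
  "is_lap_eigenvalue V E \<mu> \<longleftrightarrow>
     (\<exists>x :: 'a \<Rightarrow> real. (\<exists>v\<in>V. x v \<noteq> 0) \<and>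
        (\<forall>v\<in>V. (\<Sum>w\<in>V. hlap E v w * x w) = \<mu> * x v))"

text \<open>Smallest eigenvalue lambda_1 of the normalized Laplacian (all eigenvalues are real).\<close>
definition lambda1 :: "'a set \<Rightarrow> 'a set set \<Rightarrow> real" where
  "lambda1 V E = Min {\<mu>. is_lap_eigenvalue V E \<mu>}"

definition uniform_hypergraph :: "'a set \<Rightarrow> 'a set set \<Rightarrow> nat \<Rightarrow> bool" where
  "uniform_hypergraph V E c \<longleftrightarrow> finite V \<and> E \<noteq> {} \<and>
     (\<forall>e\<in>E. e \<subseteq> V \<and> card e = c) \<and> (\<forall>v\<in>V. hdeg E v \<ge> 1)"

definition q_tailored :: "'a set \<Rightarrow> 'a set set \<Rightarrow> real \<Rightarrow> nat \<Rightarrow> ('a \<Rightarrow> nat) \<Rightarrow> bool" where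
  "q_tailored V E q k f \<longleftrightarrow> (\<forall>v\<in>V. f v \<in> {1..k}) \<and>
     (\<forall>v\<in>V. (\<Sum>w\<in>{w\<in>V. f w = f v}. \<bar>hadj E v w\<bar>) \<le> q * real (hdeg E v))"

definition chi_qt :: "'a set \<Rightarrow> 'a set set \<Rightarrow> real \<Rightarrow> nat" where
  "chi_qt V E q = (LEAST k. \<exists>f. q_tailored V E q k f)"

end

theory Submission
  imports Defs "HOL-Analysis.Analysis" "HOL-Library.Function_Algebras"
begin


definition NN :: "'a set set \<Rightarrow> 'a \<Rightarrow> 'a \<Rightarrow> real" where
  "NN E v w = real (card {e\<in>E. v \<in> e \<and> w \<in> e})"
definition QF :: "'a set \<Rightarrow> 'a set set \<Rightarrow> ('a \<Rightarrow> real) \<Rightarrow> real" where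
  "QF V E x = (\<Sum>v\<in>V. \<Sum>w\<in>V. NN E v w * x v * x w)"
definition BF :: "'a set \<Rightarrow> 'a set set \<Rightarrow> ('a \<Rightarrow> real) \<Rightarrow> ('a \<Rightarrow> real) \<Rightarrow> real" where
  "BF V E x y = (\<Sum>v\<in>V. \<Sum>w\<in>V. NN E v w * x v * y w)"
definition QG :: "'a set \<Rightarrow> 'a set set \<Rightarrow> ('a \<Rightarrow> real) \<Rightarrow> real" where
  "QG V E x = (\<Sum>v\<in>V. real (hdeg E v) * (x v)^2)"
definition IP :: "'a set \<Rightarrow> 'a set set \<Rightarrow> ('a \<Rightarrow> real) \<Rightarrow> ('a \<Rightarrow> real) \<Rightarrow> real" where
  "IP V E x y = (\<Sum>v\<in>V. real (hdeg E v) * x v * y v)"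

lemma uh_basic:
  assumes "uniform_hypergraph V E c"
  shows "finite V" "finite E" "\<And>e. e\<in>E \<Longrightarrow> e \<subseteq> V" "\<And>e. e\<in>E \<Longrightarrow> card e = c"
    "\<And>v. v\<in>V \<Longrightarrow> hdeg E v \<ge> 1" "E \<noteq> {}"
proof -
  show fV: "finite V" using assms by (simp add: uniform_hypergraph_def)
  have "E \<subseteq> Pow V" using assms by (auto simp: uniform_hypergraph_def)
  then show "finite E" using fV by (meson finite_Pow_iff finite_subset)
qed (use assms in \<open>auto simp: uniform_hypergraph_def\<close>)

lemma NN_diag: "NN E v v = real (hdeg E v)" by (simp add: NN_def hdeg_def)
lemma NN_sym: "NN E v w = NN E w v" by (simp add: NN_def conj_commute)

lemma lap_NN: assumes "hdeg E v > 0" shows "real (hdeg E v) * hlap E v w = NN E v w"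
  using assms by (cases "v = w") (auto simp: hlap_def hadj_def NN_def hdeg_def)

lemma eig_iff_NN:
  assumes "hdeg E v > 0" and "finite V"
  shows "(\<Sum>w\<in>V. hlap E v w * x w) = \<mu> * x v \<longleftrightarrow> (\<Sum>w\<in>V. NN E v w * x w) = \<mu> * real (hdeg E v) * x v"
proof -
  have "(\<Sum>w\<in>V. NN E v w * x w) = real (hdeg E v) * (\<Sum>w\<in>V. hlap E v w * x w)"
    by (simp add: sum_distrib_left lap_NN[OF assms(1), symmetric] mult.assoc)
  then show ?thesis using assms(1) by auto
qed

lemma card_filter_sum: "finite A \<Longrightarrow> real (card {x\<in>A. P x}) = (\<Sum>x\<in>A. if P x then 1 else 0)"
  by (simp add: sum.inter_filter[symmetric])

lemma NN_rowsum:
  assumes uh: "uniform_hypergraph V E c" and v: "v \<in> V"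
  shows "(\<Sum>w\<in>V. NN E v w) = real c * real (hdeg E v)"
proof -
  note b = uh_basic[OF uh]
  have "(\<Sum>w\<in>V. NN E v w) = (\<Sum>w\<in>V. \<Sum>e\<in>E. if v \<in> e \<and> w \<in> e then 1 else 0)"
    unfolding NN_def using b by (simp add: card_filter_sum)
  also have "\<dots> = (\<Sum>e\<in>E. \<Sum>w\<in>V. if v \<in> e \<and> w \<in> e then 1 else 0)" by (rule sum.swap)
  also have "\<dots> = (\<Sum>e\<in>E. if v \<in> e then real c else 0)"
  proof (rule sum.cong[OF refl])
    fix e assume e: "e \<in> E"
    have "(\<Sum>w\<in>V. if v \<in> e \<and> w \<in> e then 1 else 0) = (if v \<in> e then (\<Sum>w\<in>V. if w \<in> e then 1 else 0) else (0::real))"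
      by auto
    also have "(\<Sum>w\<in>V. if w \<in> e then 1 else 0) = real (card {w\<in>V. w \<in> e})"
      using b by (simp add: card_filter_sum)
    also have "{w\<in>V. w \<in> e} = e" using b(3)[OF e] by auto
    finally show "(\<Sum>w\<in>V. if v \<in> e \<and> w \<in> e then 1 else 0) = (if v \<in> e then real c else 0)"
      using b(4)[OF e] by simp
  qed
  also have "\<dots> = real c * (\<Sum>e\<in>E. if v \<in> e then 1 else 0)"
    by (simp add: sum_distrib_left if_distrib cong: if_cong)
  also have "\<dots> = real c * real (hdeg E v)"
    unfolding hdeg_def using b by (simp add: card_filter_sum)
  finally show ?thesis .
qed

lemma sum_fun_apply: "(\<Sum>y\<in>t. g y) x = (\<Sum>y\<in>t. g y x)"
  by (induct t rule: infinite_finite_induct) auto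

lemma QF_expand:
  "QF V E (\<lambda>v. x v + t * y v) = QF V E x + t * BF V E x y + t * BF V E y x + t^2 * QF V E y"
  unfolding QF_def BF_def
  by (simp add: sum.distrib[symmetric] sum_distrib_left algebra_simps power2_eq_square)

lemma QG_expand:
  "QG V E (\<lambda>v. x v + t * y v) = QG V E x + 2 * t * IP V E x y + t^2 * QG V E y"
  unfolding QG_def IP_def
  by (simp add: sum.distrib[symmetric] sum_distrib_left algebra_simps power2_eq_square)

lemma BF_sym: "finite V \<Longrightarrow> BF V E x y = BF V E y x"
  unfolding BF_def
  by (subst sum.swap) (simp add: NN_sym mult.commute mult.left_commute)

lemma BF_delta:
  assumes "finite V" "u \<in> V"
  shows "BF V E (\<lambda>v. if v = u then 1 else 0) x = (\<Sum>w\<in>V. NN E u w * x w)"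
proof -
  have "BF V E (\<lambda>v. if v = u then 1 else 0) x = (\<Sum>v\<in>V. if v = u then (\<Sum>w\<in>V. NN E u w * x w) else 0)"
    unfolding BF_def by (rule sum.cong) auto
  then show ?thesis using assms by simp
qed

lemma QF_delta:
  assumes "finite V" "u \<in> V"
  shows "QF V E (\<lambda>v. if v = u then 1 else 0) = NN E u u"
proof -
  have "QF V E (\<lambda>v. if v = u then 1 else 0) = (\<Sum>v\<in>V. if v = u then (\<Sum>w\<in>V. if w = u then NN E u u else 0) else 0)"
    unfolding QF_def by (rule sum.cong) (auto intro!: sum.cong)
  then show ?thesis using assms by simp
qed

lemma IP_delta: "finite V \<Longrightarrow> u \<in> V \<Longrightarrow> IP V E x (\<lambda>v. if v = u then 1 else 0) = real (hdeg E u) * x u"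
  unfolding IP_def by (simp add: if_distrib cong: if_cong)

lemma quad_zero:
  fixes a b :: real
  assumes "\<And>t. 0 \<le> 2 * t * a + t^2 * b"
  shows "a = 0"
proof (rule ccontr)
  assume a: "a \<noteq> 0"
  define s where "s = \<bar>b\<bar> + 1"
  have pos: "s > 0" and bs: "b - 2 * s < 0" unfolding s_def by auto
  define t where "t = - a / s"
  have "2 * t * a + t^2 * b = a^2 / s^2 * (b - 2 * s)"
    unfolding t_def using pos by (simp add: field_simps power2_eq_square)
  also have "\<dots> < 0"
    using a pos bs by (intro mult_pos_neg) auto
  finally show False using assms[of t] by simp
qed



lemma compact_box:
  fixes V :: "'a set"
  shows "compact (PiE UNIV (\<lambda>v. if v \<in> V then {-1..1::real} else {0}))"
proof -
  have "compactin (product_topology (\<lambda>_. euclidean) UNIV) (PiE UNIV (\<lambda>v. if v \<in> V then {-1..1::real} else {0}))"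
    by (subst compactin_PiE) auto
  then show ?thesis by (simp add: euclidean_product_topology)
qed

lemma cont_QF: "continuous_on S (QF V E)"
  unfolding QF_def
  apply (intro continuous_intros)
  apply (rule continuous_on_subset[OF continuous_on_product_coordinates], simp)+
  done

lemma cont_QG: "continuous_on S (QG V E)"
  unfolding QG_def
  apply (intro continuous_intros)
  apply (rule continuous_on_subset[OF continuous_on_product_coordinates], simp)+
  done

lemma QG_nonneg: "0 \<le> QG V E x" unfolding QG_def by (intro sum_nonneg) auto

lemma QF_cong: "(\<And>v. v \<in> V \<Longrightarrow> x v = y v) \<Longrightarrow> QF V E x = QF V E y"
  unfolding QF_def by (auto intro!: sum.cong)
lemma QG_cong: "(\<And>v. v \<in> V \<Longrightarrow> x v = y v) \<Longrightarrow> QG V E x = QG V E y"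
  unfolding QG_def by (auto intro!: sum.cong)

lemma QG_zero:
  assumes uh: "uniform_hypergraph V E c" and "QG V E z = 0" and "v \<in> V"
  shows "z v = 0"
proof -
  note b = uh_basic[OF uh]
  have "\<forall>v\<in>V. real (hdeg E v) * (z v)^2 = 0"
    using assms(2) b(1) unfolding QG_def by (subst sum_nonneg_eq_0_iff[symmetric]) auto
  then show ?thesis using b(5)[OF assms(3)] assms(3) by auto
qed

lemma QF_scale: "QF V E (\<lambda>v. s * x v) = s^2 * QF V E x"
  unfolding QF_def by (simp add: sum_distrib_left power2_eq_square algebra_simps)
lemma QG_scale: "QG V E (\<lambda>v. s * x v) = s^2 * QG V E x"
  unfolding QG_def by (simp add: sum_distrib_left power2_eq_square algebra_simps)

lemma exists_min_eig:
  assumes uh: "uniform_hypergraph V E c" and ne: "V \<noteq> {}"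
  shows "\<exists>\<mu>. is_lap_eigenvalue V E \<mu> \<and> (\<forall>z. \<mu> * QG V E z \<le> QF V E z)"
proof -
  note b = uh_basic[OF uh]
  define K where "K = PiE UNIV (\<lambda>v. if v \<in> V then {-1..1::real} else {0})"
  define S where "S = K \<inter> {x. QG V E x = 1}"
  have cS: "compact S" unfolding S_def K_def
    by (intro compact_Int_closed compact_box closed_Collect_eq cont_QG continuous_on_const)
  obtain v0 where v0: "v0 \<in> V" using ne by auto
  define d0 where "d0 = real (hdeg E v0)"
  have d0: "d0 \<ge> 1" using b(5)[OF v0] unfolding d0_def by simp
  define x1 where "x1 = (\<lambda>v. if v = v0 then 1 / sqrt d0 else 0)"
  have "QG V E x1 = (\<Sum>v\<in>V. if v = v0 then d0 * (1 / sqrt d0)^2 else 0)"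
    unfolding QG_def x1_def d0_def by (rule sum.cong) auto
  also have "\<dots> = d0 * (1 / sqrt d0)^2" using b(1) v0 by simp
  also have "\<dots> = 1" using d0 by (simp add: power_divide)
  finally have "QG V E x1 = 1" .
  moreover have "x1 \<in> K"
  proof -
    have "1 / sqrt d0 \<le> 1" using d0 by (simp add: divide_le_eq)
    moreover have "-1 \<le> 1 / sqrt d0" using d0 by (smt (verit) divide_nonneg_nonneg real_sqrt_ge_zero)
    ultimately show ?thesis unfolding K_def x1_def using v0 by (auto simp: PiE_iff)
  qed
  ultimately have neS: "S \<noteq> {}" unfolding S_def by auto
  obtain x0 where x0S: "x0 \<in> S" and x0min: "\<And>y. y \<in> S \<Longrightarrow> QF V E x0 \<le> QF V E y"
    using continuous_attains_inf[OF cS neS cont_QF] by blast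
  define \<mu> where "\<mu> = QF V E x0"
  have G1: "QG V E x0 = 1" using x0S unfolding S_def by auto
  have A: "\<mu> * QG V E z \<le> QF V E z" for z
  proof -
    define z' where "z' = (\<lambda>v. if v \<in> V then z v else 0)"
    have F': "QF V E z' = QF V E z" and G': "QG V E z' = QG V E z"
      by (auto intro!: QF_cong QG_cong simp: z'_def)
    show ?thesis
    proof (cases "QG V E z = 0")
      case True
      then have "QF V E z = 0" unfolding QF_def using QG_zero[OF uh True] by simp
      then show ?thesis using True by simp
    next
      case False
      then have gp: "QG V E z > 0" using QG_nonneg[of V E z] by simp
      define s where "s = 1 / sqrt (QG V E z)"
      define y where "y = (\<lambda>v. s * z' v)"
      have s2: "s^2 = 1 / QG V E z" unfolding s_def using gp by (simp add: power_divide)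
      have Gy: "QG V E y = 1" unfolding y_def QG_scale G' s2 using gp by simp
      have "y \<in> K"
      proof -
        have "\<bar>y v\<bar> \<le> 1" if v: "v \<in> V" for v
        proof -
          have "real (hdeg E v) * (y v)^2 \<le> QG V E y"
            unfolding QG_def using b(1) v by (intro member_le_sum) auto
          then have "real (hdeg E v) * (y v)^2 \<le> 1" using Gy by simp
          moreover have "(y v)^2 \<le> real (hdeg E v) * (y v)^2"
            using b(5)[OF v] mult_right_mono[of 1 "real (hdeg E v)" "(y v)^2"] by simp
          ultimately have "(y v)^2 \<le> 1" by linarith
          then show ?thesis by (simp add: abs_square_le_1)
        qed
        then show ?thesis unfolding K_def by (force simp: PiE_iff y_def z'_def abs_le_iff)
      qed
      then have "y \<in> S" using Gy unfolding S_def by auto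
      then have "\<mu> \<le> QF V E y" using x0min unfolding \<mu>_def by auto
      also have "QF V E y = QF V E z / QG V E z" unfolding y_def QF_scale F' s2 by simp
      finally show ?thesis using gp by (simp add: le_divide_eq)
    qed
  qed
  have eig: "(\<Sum>w\<in>V. NN E u w * x0 w) = \<mu> * real (hdeg E u) * x0 u" if u: "u \<in> V" for u
  proof -
    define \<delta> where "\<delta> = (\<lambda>v. if v = u then 1 else (0::real))"
    define a where "a = (\<Sum>w\<in>V. NN E u w * x0 w) - \<mu> * real (hdeg E u) * x0 u"
    have "0 \<le> 2 * t * a + t^2 * (NN E u u - \<mu> * real (hdeg E u))" for t
    proof -
      have "\<mu> * QG V E (\<lambda>v. x0 v + t * \<delta> v) \<le> QF V E (\<lambda>v. x0 v + t * \<delta> v)" by (rule A)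
      moreover have "QF V E (\<lambda>v. x0 v + t * \<delta> v) = \<mu> + 2 * t * (\<Sum>w\<in>V. NN E u w * x0 w) + t^2 * NN E u u"
        unfolding QF_expand \<delta>_def BF_sym[OF b(1), of E x0] BF_delta[OF b(1) u] QF_delta[OF b(1) u] \<mu>_def
        by simp
      moreover have "QG V E (\<lambda>v. x0 v + t * \<delta> v) = 1 + 2 * t * (real (hdeg E u) * x0 u) + t^2 * real (hdeg E u)"
      proof -
        have "QG V E \<delta> = (\<Sum>v\<in>V. if v = u then real (hdeg E u) else 0)"
          unfolding \<delta>_def QG_def by (rule sum.cong) auto
        also have "\<dots> = real (hdeg E u)" using b(1) u by simp
        finally have "QG V E \<delta> = real (hdeg E u)" .
        then show ?thesis unfolding QG_expand G1 \<delta>_def IP_delta[OF b(1) u] by simp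
      qed
      ultimately show ?thesis unfolding a_def by (simp add: algebra_simps)
    qed
    then have "a = 0" by (rule quad_zero)
    then show ?thesis unfolding a_def by simp
  qed
  have "is_lap_eigenvalue V E \<mu>"
    unfolding is_lap_eigenvalue_def
  proof (intro exI[of _ x0] conjI ballI)
    show "\<exists>v\<in>V. x0 v \<noteq> 0"
    proof (rule ccontr)
      assume "\<not> (\<exists>v\<in>V. x0 v \<noteq> 0)"
      then have "QG V E x0 = 0" unfolding QG_def by simp
      then show False using G1 by simp
    qed
    fix v assume v: "v \<in> V"
    show "(\<Sum>w\<in>V. hlap E v w * x0 w) = \<mu> * x0 v"
      using eig_iff_NN[of E v V x0 \<mu>] b(5)[OF v] b(1) eig[OF v] by simp
  qed
  then show ?thesis using A by blast
qed



interpretation fvs: vector_space "\<lambda>(r::real) (f::'a \<Rightarrow> real). (\<lambda>x. r * f x)"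
  by unfold_locales (auto simp: fun_eq_iff algebra_simps)

lemma sum_delta_mult: "finite A \<Longrightarrow> (\<Sum>y\<in>A. g y * (if v = y then 1 else (0::real))) = (if v \<in> A then g v else 0)"
proof -
  have "(\<lambda>y. g y * (if v = y then 1 else (0::real))) = (\<lambda>y. if v = y then g y else 0)" by auto
  moreover assume "finite A"
  ultimately show ?thesis by (simp only: sum.delta')
qed

definition EVN :: "'a set \<Rightarrow> 'a set set \<Rightarrow> real \<Rightarrow> ('a \<Rightarrow> real) \<Rightarrow> bool" where
  "EVN V E \<mu> x \<longleftrightarrow> (\<exists>v\<in>V. x v \<noteq> 0) \<and> (\<forall>v\<in>V. (\<Sum>w\<in>V. NN E v w * x w) = \<mu> * real (hdeg E v) * x v)"

lemma eig_EVN: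
  assumes uh: "uniform_hypergraph V E c"
  shows "is_lap_eigenvalue V E \<mu> \<longleftrightarrow> (\<exists>x. EVN V E \<mu> x)"
proof -
  note b = uh_basic[OF uh]
  have "(\<Sum>w\<in>V. hlap E v w * x w) = \<mu> * x v \<longleftrightarrow> (\<Sum>w\<in>V. NN E v w * x w) = \<mu> * real (hdeg E v) * x v"
    if "v \<in> V" for v x using eig_iff_NN[of E v V x \<mu>] b(5)[OF that] b(1) by simp
  then show ?thesis unfolding is_lap_eigenvalue_def EVN_def by auto
qed

lemma EVN_orth:
  assumes uh: "uniform_hypergraph V E c" and x: "EVN V E \<mu> x" and y: "EVN V E \<nu> y" and ne: "\<mu> \<noteq> \<nu>"
  shows "IP V E x y = 0"
proof -
  note b = uh_basic[OF uh]
  have "BF V E y x = (\<Sum>v\<in>V. y v * (\<Sum>w\<in>V. NN E v w * x w))"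
    unfolding BF_def by (simp add: sum_distrib_left algebra_simps)
  also have "\<dots> = (\<Sum>v\<in>V. y v * (\<mu> * real (hdeg E v) * x v))"
    using x unfolding EVN_def by (auto intro!: sum.cong)
  also have "\<dots> = \<mu> * IP V E x y" unfolding IP_def by (simp add: sum_distrib_left algebra_simps)
  finally have 1: "BF V E y x = \<mu> * IP V E x y" .
  have "BF V E x y = (\<Sum>v\<in>V. x v * (\<Sum>w\<in>V. NN E v w * y w))"
    unfolding BF_def by (simp add: sum_distrib_left algebra_simps)
  also have "\<dots> = (\<Sum>v\<in>V. x v * (\<nu> * real (hdeg E v) * y v))"
    using y unfolding EVN_def by (auto intro!: sum.cong)
  also have "\<dots> = \<nu> * IP V E x y" unfolding IP_def by (simp add: sum_distrib_left algebra_simps)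
  finally have 2: "BF V E x y = \<nu> * IP V E x y" .
  have "\<mu> * IP V E x y = \<nu> * IP V E x y" using 1 2 BF_sym[OF b(1), of E x y] by simp
  then show ?thesis using ne by simp
qed

lemma IP_self_pos:
  assumes uh: "uniform_hypergraph V E c" and x: "\<exists>v\<in>V. x v \<noteq> 0"
  shows "IP V E x x > 0"
proof -
  note b = uh_basic[OF uh]
  obtain v where v: "v \<in> V" "x v \<noteq> 0" using x by auto
  have d: "real (hdeg E v) > 0" using b(5)[OF v(1)] by simp
  have xx: "x v * x v > 0" using v(2) by (auto simp add: zero_less_mult_iff linorder_neq_iff)
  have "0 < real (hdeg E v) * x v * x v" using mult_pos_pos[OF d xx] by (simp add: mult.assoc)
  also have "\<dots> \<le> IP V E x x" unfolding IP_def using b(1) v(1)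
    by (intro member_le_sum) (auto simp: mult.assoc)
  finally show ?thesis .
qed

lemma finite_eigs:
  assumes uh: "uniform_hypergraph V E c"
  shows "finite {\<mu>. is_lap_eigenvalue V E \<mu>}"
proof -
  note b = uh_basic[OF uh]
  define Eg where "Eg = {\<mu>. is_lap_eigenvalue V E \<mu>}"
  define r where "r = (\<lambda>\<mu>. (\<lambda>v. if v \<in> V then (SOME x. EVN V E \<mu> x) v else 0))"
  have EVr: "EVN V E \<mu> (r \<mu>)" if "\<mu> \<in> Eg" for \<mu>
  proof -
    have "\<exists>x. EVN V E \<mu> x" using that eig_EVN[OF uh] unfolding Eg_def by auto
    then have "EVN V E \<mu> (SOME x. EVN V E \<mu> x)" by (rule someI_ex)
    then show ?thesis unfolding EVN_def r_def by simp
  qed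
  have inj: "inj_on r Eg"
  proof (rule inj_onI)
    fix \<mu> \<nu> assume m: "\<mu> \<in> Eg" and n: "\<nu> \<in> Eg" and eq: "r \<mu> = r \<nu>"
    show "\<mu> = \<nu>"
    proof (rule ccontr)
      assume "\<mu> \<noteq> \<nu>"
      then have "IP V E (r \<mu>) (r \<nu>) = 0" using EVN_orth[OF uh EVr[OF m] EVr[OF n]] by simp
      moreover have "IP V E (r \<mu>) (r \<mu>) > 0" using IP_self_pos[OF uh] EVr[OF m] unfolding EVN_def by auto
      ultimately show False using eq by simp
    qed
  qed
  define T where "T = (\<lambda>u. (\<lambda>v. if v = u then 1 else (0::real))) ` V"
  have span: "r \<mu> \<in> fvs.span T" for \<mu>
  proof -
    have "r \<mu> = (\<Sum>u\<in>V. (\<lambda>x. r \<mu> u * (\<lambda>v. if v = u then 1 else (0::real)) x))"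
    proof
      fix v
      show "r \<mu> v = (\<Sum>u\<in>V. (\<lambda>x. r \<mu> u * (\<lambda>v. if v = u then 1 else (0::real)) x)) v"
        unfolding sum_fun_apply using b(1) by (cases "v \<in> V") (auto simp: r_def sum_delta_mult)
    qed
    also have "\<dots> \<in> fvs.span T"
      by (intro fvs.span_sum fvs.span_scale fvs.span_base) (auto simp: T_def)
    finally show ?thesis .
  qed
  have indep: "\<not> fvs.dependent (r ` Eg)"
  proof
    assume "fvs.dependent (r ` Eg)"
    then obtain t u y0 where t: "finite t" "t \<subseteq> r ` Eg" and s: "(\<Sum>y\<in>t. (\<lambda>x. u y * y x)) = 0"
      and y0: "y0 \<in> t" "u y0 \<noteq> 0"
      unfolding fvs.dependent_explicit by blast
    obtain \<mu>0 where m0: "\<mu>0 \<in> Eg" "y0 = r \<mu>0" using y0 t by auto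
    have "IP V E (\<Sum>y\<in>t. (\<lambda>x. u y * y x)) y0 = 0" unfolding s IP_def by simp
    moreover have "IP V E (\<Sum>y\<in>t. (\<lambda>x. u y * y x)) y0 = (\<Sum>y\<in>t. u y * IP V E y y0)"
      unfolding IP_def sum_fun_apply sum_distrib_left sum_distrib_right
      by (subst sum.swap) (simp add: mult_ac)
    moreover have "(\<Sum>y\<in>t. u y * IP V E y y0) = u y0 * IP V E y0 y0"
    proof -
      have "(\<Sum>y\<in>t. u y * IP V E y y0) = u y0 * IP V E y0 y0 + (\<Sum>y\<in>t - {y0}. u y * IP V E y y0)"
        using t(1) y0(1) by (simp add: sum.remove)
      moreover have "(\<Sum>y\<in>t - {y0}. u y * IP V E y y0) = 0"
      proof (rule sum.neutral, rule ballI)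
        fix y assume y: "y \<in> t - {y0}"
        then obtain \<nu> where n: "\<nu> \<in> Eg" "y = r \<nu>" using t by auto
        have "\<nu> \<noteq> \<mu>0" using y n m0 by auto
        then have "IP V E y y0 = 0" using EVN_orth[OF uh EVr[OF n(1)] EVr[OF m0(1)]] n m0 by simp
        then show "u y * IP V E y y0 = 0" by simp
      qed
      ultimately show ?thesis by simp
    qed
    moreover have "IP V E y0 y0 > 0" using IP_self_pos[OF uh] EVr[OF m0(1)] m0(2) unfolding EVN_def by auto
    ultimately show False using y0(2) by simp
  qed
  have "r ` Eg \<subseteq> fvs.span T" using span by auto
  then have "finite (r ` Eg)" using fvs.independent_span_bound[of T "r ` Eg"] indep b(1)
    unfolding T_def by auto
  then have "finite Eg" using inj finite_imageD by blast
  then show ?thesis unfolding Eg_def .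
qed



lemma ind_sum_prod:
  assumes a: "a \<in> {1..k}" and b: "b \<in> {1..(k::nat)}"
  shows "(\<Sum>j\<in>{1..k}. ((if a = j then 1 else 0) - 1 / real k) * ((if b = j then 1 else 0) - 1 / real k))
         = (if a = b then 1 else 0) - 1 / real k"
proof -
  have k: "real k > 0" using a by auto
  have e: "((if a = j then 1 else 0) - 1 / real k) * ((if b = j then 1 else 0) - 1 / real k)
     = (if a = j \<and> b = j then 1 else 0) - (if a = j then 1 else 0) / real k - (if b = j then 1 else 0) / real k + 1 / (real k)^2" for j
    using k by (auto simp: field_simps power2_eq_square)
  have s1: "(\<Sum>j\<in>{1..k}. (if a = j \<and> b = j then 1 else 0::real)) = (if a = b then 1 else 0)"
  proof (cases "a = b")
    case True then show ?thesis using a by (simp add: sum.delta)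
  next
    case False then show ?thesis by (auto intro!: sum.neutral)
  qed
  have s2: "(\<Sum>j\<in>{1..k}. (if a = j then 1 else 0::real) / real k) = 1 / real k"
    using a by (simp add: sum_divide_distrib[symmetric] sum.delta)
  have s3: "(\<Sum>j\<in>{1..k}. (if b = j then 1 else 0::real) / real k) = 1 / real k"
    using b by (simp add: sum_divide_distrib[symmetric] sum.delta)
  have s4: "(\<Sum>j\<in>{1..k}. 1 / (real k)^2) = 1 / real k" using k by (simp add: power2_eq_square)
  show ?thesis unfolding e sum.distrib sum_subtractf s1 s2 s3 s4 by simp
qed

lemma NN_hadj: "NN E v w = \<bar>hadj E v w\<bar> + (if w = v then real (hdeg E v) else 0)"
  by (auto simp: NN_def hadj_def hdeg_def)

lemma color_bound:
  assumes uh: "uniform_hypergraph V E c" and tq: "q_tailored V E q k f" and k: "k \<ge> 1"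
    and ne: "V \<noteq> {}"
    and A: "\<And>z. \<mu> * QG V E z \<le> QF V E z"
  shows "\<mu> * (real k - 1) \<le> real k * (q + 1) - real c"
proof -
  note b = uh_basic[OF uh]
  have fr: "\<And>v. v \<in> V \<Longrightarrow> f v \<in> {1..k}" and tq2: "\<And>v. v \<in> V \<Longrightarrow> (\<Sum>w\<in>{w\<in>V. f w = f v}. \<bar>hadj E v w\<bar>) \<le> q * real (hdeg E v)"
    using tq unfolding q_tailored_def by auto
  define x where "x = (\<lambda>j v. (if f v = j then 1 else 0) - 1 / real k)"
  have kp: "real k > 0" using k by simp
  have SF: "(\<Sum>j\<in>{1..k}. QF V E (x j)) = (\<Sum>v\<in>V. \<Sum>w\<in>V. NN E v w * ((if f v = f w then 1 else 0) - 1 / real k))"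
  proof -
    have "(\<Sum>j\<in>{1..k}. QF V E (x j)) = (\<Sum>j\<in>{1..k}. \<Sum>v\<in>V. \<Sum>w\<in>V. NN E v w * x j v * x j w)"
      unfolding QF_def ..
    also have "\<dots> = (\<Sum>v\<in>V. \<Sum>j\<in>{1..k}. \<Sum>w\<in>V. NN E v w * x j v * x j w)"
      by (rule sum.swap)
    also have "\<dots> = (\<Sum>v\<in>V. \<Sum>w\<in>V. \<Sum>j\<in>{1..k}. NN E v w * x j v * x j w)"
      by (rule sum.cong[OF refl], rule sum.swap)
    also have "\<dots> = (\<Sum>v\<in>V. \<Sum>w\<in>V. NN E v w * ((if f v = f w then 1 else 0) - 1 / real k))"
    proof (intro sum.cong refl)
      fix v w assume v: "v \<in> V" and w: "w \<in> V"
      have "(\<Sum>j\<in>{1..k}. NN E v w * x j v * x j w) = NN E v w * (\<Sum>j\<in>{1..k}. x j v * x j w)"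
        by (simp add: sum_distrib_left mult.assoc)
      also have "(\<Sum>j\<in>{1..k}. x j v * x j w) = (if f v = f w then 1 else 0) - 1 / real k"
        unfolding x_def using ind_sum_prod[OF fr[OF v] fr[OF w]] by simp
      finally show "(\<Sum>j\<in>{1..k}. NN E v w * x j v * x j w) = NN E v w * ((if f v = f w then 1 else 0) - 1 / real k)" .
    qed
    finally show ?thesis .
  qed
  define vol where "vol = (\<Sum>v\<in>V. real (hdeg E v))"
  have volp: "vol > 0"
  proof -
    obtain v where v: "v \<in> V" using ne by auto
    have "0 < real (hdeg E v)" using b(5)[OF v] by simp
    also have "\<dots> \<le> vol" unfolding vol_def using b(1) v by (intro member_le_sum) auto
    finally show ?thesis .
  qed
  have SG: "(\<Sum>j\<in>{1..k}. QG V E (x j)) = (1 - 1 / real k) * vol"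
  proof -
    have "(\<Sum>j\<in>{1..k}. QG V E (x j)) = (\<Sum>v\<in>V. \<Sum>j\<in>{1..k}. real (hdeg E v) * (x j v)^2)"
      unfolding QG_def by (rule sum.swap)
    also have "\<dots> = (\<Sum>v\<in>V. (1 - 1 / real k) * real (hdeg E v))"
    proof (rule sum.cong[OF refl])
      fix v assume v: "v \<in> V"
      have "(\<Sum>j\<in>{1..k}. real (hdeg E v) * (x j v)^2) = real (hdeg E v) * (\<Sum>j\<in>{1..k}. x j v * x j v)"
        by (simp add: sum_distrib_left power2_eq_square)
      also have "(\<Sum>j\<in>{1..k}. x j v * x j v) = 1 - 1 / real k"
        unfolding x_def using ind_sum_prod[OF fr[OF v] fr[OF v]] by simp
      finally show "(\<Sum>j\<in>{1..k}. real (hdeg E v) * (x j v)^2) = (1 - 1 / real k) * real (hdeg E v)" by simp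
    qed
    also have "\<dots> = (1 - 1 / real k) * vol" unfolding vol_def by (simp add: sum_distrib_left)
    finally show ?thesis .
  qed
  have row: "(\<Sum>w\<in>V. NN E v w * ((if f v = f w then 1 else 0) - 1 / real k)) \<le> (q + 1) * real (hdeg E v) - real c * real (hdeg E v) / real k"
    if v: "v \<in> V" for v
  proof -
    have "(\<Sum>w\<in>V. NN E v w * ((if f v = f w then 1 else 0) - 1 / real k))
        = (\<Sum>w\<in>V. (if f v = f w then NN E v w else 0) - NN E v w / real k)"
      by (rule sum.cong) (auto simp: algebra_simps)
    also have "\<dots> = (\<Sum>w\<in>V. if f v = f w then NN E v w else 0) - (\<Sum>w\<in>V. NN E v w) / real k"
      by (simp add: sum_subtractf sum_divide_distrib)
    also have "(\<Sum>w\<in>V. if f v = f w then NN E v w else 0) = (\<Sum>w\<in>{w\<in>V. f w = f v}. NN E v w)"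
    proof -
      have "(\<Sum>w\<in>V. if f v = f w then NN E v w else 0) = (\<Sum>w\<in>{w\<in>V. f v = f w}. NN E v w)"
        using b(1) by (simp add: sum.inter_filter)
      also have "{w\<in>V. f v = f w} = {w\<in>V. f w = f v}" by auto
      finally show ?thesis .
    qed
    also have "\<dots> = (\<Sum>w\<in>{w\<in>V. f w = f v}. \<bar>hadj E v w\<bar>) + (\<Sum>w\<in>{w\<in>V. f w = f v}. if w = v then real (hdeg E v) else 0)"
      unfolding NN_hadj sum.distrib ..
    also have "(\<Sum>w\<in>{w\<in>V. f w = f v}. if w = v then real (hdeg E v) else 0) = real (hdeg E v)"
      using b(1) v by (simp add: sum.delta)
    also have "(\<Sum>w\<in>V. NN E v w) = real c * real (hdeg E v)" by (rule NN_rowsum[OF uh v])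
    finally show ?thesis using tq2[OF v] by (simp add: algebra_simps)
  qed
  have "\<mu> * ((1 - 1 / real k) * vol) = (\<Sum>j\<in>{1..k}. \<mu> * QG V E (x j))"
    unfolding SG[symmetric] by (simp add: sum_distrib_left)
  also have "\<dots> \<le> (\<Sum>j\<in>{1..k}. QF V E (x j))" by (intro sum_mono A)
  also have "\<dots> \<le> (\<Sum>v\<in>V. (q + 1) * real (hdeg E v) - real c * real (hdeg E v) / real k)"
    unfolding SF by (intro sum_mono row)
  also have "\<dots> = ((q + 1) - real c / real k) * vol"
    unfolding vol_def by (simp add: sum_subtractf sum_distrib_left sum_divide_distrib sum.distrib algebra_simps)
  finally have "\<mu> * (1 - 1 / real k) \<le> (q + 1) - real c / real k"
    using volp by (simp add: mult.assoc[symmetric])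
  then have "real k * (\<mu> * (1 - 1 / real k)) \<le> real k * ((q + 1) - real c / real k)"
    using kp by (intro mult_left_mono) auto
  then show ?thesis using kp by (simp add: algebra_simps)
qed



lemma final_alg:
  fixes l c q k :: real
  assumes "l * (k - 1) \<le> k * (q + 1) - c" "l \<le> c" "k \<ge> 1"
  shows "(c - l) / (q + 1 - l) \<le> k"
proof (cases "q + 1 - l > 0")
  case True
  have "c - l \<le> k * (q + 1 - l)" using assms(1) by (simp add: algebra_simps)
  then show ?thesis using True by (simp add: divide_le_eq)
next
  case False
  then have "q + 1 - l \<le> 0" by simp
  moreover have "c - l \<ge> 0" using assms(2) by simp
  ultimately have "(c - l) / (q + 1 - l) \<le> 0" by (simp add: divide_nonneg_nonpos)
  then show ?thesis using assms(3) by simp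
qed

lemma part1:
  assumes uh: "uniform_hypergraph V E c" and c2: "c \<ge> 2" and q0: "0 \<le> q" and qc: "q \<le> real c - 1"
  shows "real (chi_qt V E q) \<ge> (real c - lambda1 V E) / (q + 1 - lambda1 V E)"
proof -
  note b = uh_basic[OF uh]
  obtain e where e: "e \<in> E" using b(6) by auto
  have "card e \<ge> 2" using b(4)[OF e] c2 by simp
  then have "e \<noteq> {}" by auto
  then have ne: "V \<noteq> {}" using b(3)[OF e] by auto
  obtain \<mu> where mu: "is_lap_eigenvalue V E \<mu>" and A: "\<And>z. \<mu> * QG V E z \<le> QF V E z"
    using exists_min_eig[OF uh ne] by blast
  have fin: "finite {\<mu>. is_lap_eigenvalue V E \<mu>}" by (rule finite_eigs[OF uh])
  have l_mu: "lambda1 V E \<le> \<mu>" unfolding lambda1_def using fin mu by (intro Min_le) auto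
  have "EVN V E (real c) (\<lambda>_. 1)"
    unfolding EVN_def using ne NN_rowsum[OF uh] by auto
  then have "is_lap_eigenvalue V E (real c)" using eig_EVN[OF uh] by blast
  then have l_c: "lambda1 V E \<le> real c" unfolding lambda1_def using fin by (intro Min_le) auto
  obtain h where h: "bij_betw h V {0..<card V}" using ex_bij_betw_finite_nat[OF b(1)] by blast
  have "q_tailored V E q (card V) (\<lambda>v. h v + 1)"
    unfolding q_tailored_def
  proof (intro conjI ballI)
    fix v assume v: "v \<in> V"
    have "h v \<in> {0..<card V}" using h v by (auto simp: bij_betw_def)
    then show "h v + 1 \<in> {1..card V}" by auto
    have "{w \<in> V. h w + 1 = h v + 1} = {v}" using h v by (auto simp: bij_betw_def inj_on_def)
    then show "(\<Sum>w\<in>{w \<in> V. h w + 1 = h v + 1}. \<bar>hadj E v w\<bar>) \<le> q * real (hdeg E v)"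
      using q0 by (simp add: hadj_def)
  qed
  then have ex: "\<exists>k f. q_tailored V E q k f" by blast
  define k where "k = chi_qt V E q"
  have "\<exists>f. q_tailored V E q k f" unfolding k_def chi_qt_def using ex by (rule LeastI_ex)
  then obtain f where f: "q_tailored V E q k f" by blast
  have k1: "k \<ge> 1"
  proof -
    obtain v where "v \<in> V" using ne by auto
    then have "f v \<in> {1..k}" using f unfolding q_tailored_def by auto
    then show ?thesis by auto
  qed
  have cb: "\<mu> * (real k - 1) \<le> real k * (q + 1) - real c" by (rule color_bound[OF uh f k1 ne A])
  have "lambda1 V E * (real k - 1) \<le> \<mu> * (real k - 1)"
    using l_mu k1 by (intro mult_right_mono) auto
  then have "lambda1 V E * (real k - 1) \<le> real k * (q + 1) - real c" using cb by linarith
  then show ?thesis unfolding k_def[symmetric] using final_alg l_c k1 by simp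
qed



lemma sing_filter: "{e. e = X \<and> Q e} = (if Q X then {X} else {})" by auto

lemma ex_uh: "c \<ge> 2 \<Longrightarrow> uniform_hypergraph {0..<c} {{0..<c::nat}} c"
  by (auto simp: uniform_hypergraph_def hdeg_def sing_filter)

lemma ex_hdeg: "v \<in> {0..<c} \<Longrightarrow> hdeg {{0..<c::nat}} v = 1"
  by (auto simp: hdeg_def sing_filter)

lemma ex_NN: "v \<in> {0..<c} \<Longrightarrow> w \<in> {0..<c} \<Longrightarrow> NN {{0..<c::nat}} v w = 1"
  by (auto simp: NN_def sing_filter)

lemma ex_hadj: "v \<in> {0..<c} \<Longrightarrow> w \<in> {0..<c} \<Longrightarrow> \<bar>hadj {{0..<c::nat}} v w\<bar> = (if v = w then 0 else 1)"
  by (auto simp: hadj_def sing_filter)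

lemma ex_eigs:
  assumes c2: "c \<ge> 2"
  shows "{\<mu>. is_lap_eigenvalue {0..<c} {{0..<c::nat}} \<mu>} = {0, real c}"
proof -
  let ?V = "{0..<c::nat}" and ?E = "{{0..<c::nat}}"
  have uh: "uniform_hypergraph ?V ?E c" using ex_uh[OF c2] .
  have ev: "EVN ?V ?E \<mu> x \<longleftrightarrow> (\<exists>v\<in>?V. x v \<noteq> 0) \<and> (\<forall>v\<in>?V. (\<Sum>w\<in>?V. x w) = \<mu> * x v)" for \<mu> x
  proof -
    have "(\<Sum>w\<in>?V. NN ?E v w * x w) = (\<Sum>w\<in>?V. x w)" if "v \<in> ?V" for v
      using that by (intro sum.cong) (auto simp: ex_NN)
    then show ?thesis unfolding EVN_def by (auto simp: ex_hdeg)
  qed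
  show ?thesis
  proof (intro equalityI subsetI)
    fix \<mu> assume "\<mu> \<in> {\<mu>. is_lap_eigenvalue ?V ?E \<mu>}"
    then obtain x where x: "EVN ?V ?E \<mu> x" using eig_EVN[OF uh] by auto
    then obtain v0 where v0: "v0 \<in> ?V" "x v0 \<noteq> 0" and eq: "\<And>v. v \<in> ?V \<Longrightarrow> (\<Sum>w\<in>?V. x w) = \<mu> * x v"
      unfolding ev by auto
    show "\<mu> \<in> {0, real c}"
    proof (cases "\<mu> = 0")
      case False
      define s where "s = (\<Sum>w\<in>?V. x w)"
      have xv: "x v = s / \<mu>" if "v \<in> ?V" for v using eq[OF that] False unfolding s_def by simp
      have "s \<noteq> 0" using xv[OF v0(1)] v0(2) by auto
      have "s = (\<Sum>w\<in>?V. x w)" by (simp add: s_def)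
      also have "\<dots> = (\<Sum>w\<in>?V. s / \<mu>)" by (rule sum.cong) (auto simp: xv)
      also have "\<dots> = real c * s / \<mu>" by simp
      finally have "\<mu> = real c" using \<open>s \<noteq> 0\<close> False by (simp add: field_simps)
      then show ?thesis by simp
    qed simp
  next
    fix \<mu> assume "\<mu> \<in> {0, real c}"
    then consider "\<mu> = 0" | "\<mu> = real c" by auto
    then show "\<mu> \<in> {\<mu>. is_lap_eigenvalue ?V ?E \<mu>}"
    proof cases
      case 1
      define x where "x = (\<lambda>v::nat. if v = 0 then 1 else if v = 1 then -1 else (0::real))"
      have "(\<Sum>w\<in>?V. x w) = (\<Sum>w\<in>{0,1}. x w)"
        using c2 by (intro sum.mono_neutral_right) (auto simp: x_def)
      also have "\<dots> = 0" by (simp add: x_def)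
      finally have s0: "(\<Sum>w\<in>?V. x w) = 0" .
      have "EVN ?V ?E \<mu> x" unfolding ev 1 using s0 c2 by (auto simp: x_def intro!: exI[of _ 0])
      then show ?thesis using eig_EVN[OF uh] by auto
    next
      case 2
      have "EVN ?V ?E \<mu> (\<lambda>_. 1)" unfolding ev 2 using c2 by (auto intro!: exI[of _ 0])
      then show ?thesis using eig_EVN[OF uh] by auto
    qed
  qed
qed

lemma ex_lambda1:
  assumes c2: "c \<ge> 2"
  shows "lambda1 {0..<c} {{0..<c::nat}} = 0"
  unfolding lambda1_def ex_eigs[OF c2] by simp



lemma ex_tail_sum:
  assumes "C \<subseteq> {0..<c::nat}" "v \<in> C"
  shows "(\<Sum>w\<in>C. \<bar>hadj {{0..<c}} v w\<bar>) = real (card C) - 1"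
proof -
  have fC: "finite C" using assms(1) finite_subset by blast
  have "(\<Sum>w\<in>C. \<bar>hadj {{0..<c}} v w\<bar>) = (\<Sum>w\<in>C. if w = v then 0 else 1)"
  proof (rule sum.cong[OF refl])
    fix w assume w: "w \<in> C"
    have "v \<in> {0..<c}" "w \<in> {0..<c}" using assms w by auto
    then show "\<bar>hadj {{0..<c}} v w\<bar> = (if w = v then 0 else 1)" using ex_hadj[of v c w] by auto
  qed
  also have "\<dots> = (\<Sum>w\<in>C - {v}. 1)"
    using fC assms(2) by (simp add: sum.remove)
  also have "\<dots> = real (card C) - 1"
  proof -
    have "card C \<ge> 1" using fC assms(2) by (metis card_0_eq empty_iff less_one not_le)
    then show ?thesis using fC assms(2) by (simp add: of_nat_diff)
  qed
  finally show ?thesis .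
qed

lemma ex_class_card:
  assumes "q_tailored {0..<c} {{0..<c::nat}} (real q) k f"
  shows "card {w\<in>{0..<c}. f w = j} \<le> q + 1"
proof (cases "{w\<in>{0..<c}. f w = j} = {}")
  case False
  then obtain v where v: "v \<in> {0..<c}" "f v = j" by auto
  have "(\<Sum>w\<in>{w\<in>{0..<c}. f w = f v}. \<bar>hadj {{0..<c}} v w\<bar>) \<le> real q * real (hdeg {{0..<c}} v)"
    using assms v unfolding q_tailored_def by blast
  moreover have "{w\<in>{0..<c}. f w = f v} \<subseteq> {0..<c}" "v \<in> {w\<in>{0..<c}. f w = f v}" using v by auto
  ultimately have "real (card {w\<in>{0..<c}. f w = f v}) - 1 \<le> real q"
    using ex_tail_sum[of "{w\<in>{0..<c}. f w = f v}" c v] ex_hdeg[OF v(1)] by simp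
  then show ?thesis using v by simp
qed (simp only: card.empty)

lemma ex_lower:
  assumes "q_tailored {0..<c} {{0..<c::nat}} (real q) k f"
  shows "c \<le> k * (q + 1)"
proof -
  have "{0..<c} = (\<Union>j\<in>{1..k}. {w\<in>{0..<c}. f w = j})"
    using assms unfolding q_tailored_def by auto
  then have "c = card (\<Union>j\<in>{1..k}. {w\<in>{0..<c}. f w = j})" by (metis card_atLeastLessThan minus_nat.diff_0)
  also have "\<dots> \<le> (\<Sum>j\<in>{1..k}. card {w\<in>{0..<c}. f w = j})" by (rule card_UN_le) simp
  also have "\<dots> \<le> (\<Sum>j\<in>{1..k}. q + 1)" by (intro sum_mono ex_class_card[OF assms])
  also have "\<dots> = k * (q + 1)" by simp
  finally show ?thesis .
qed

lemma ex_chi: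
  assumes c2: "c \<ge> 2" and dv: "(q + 1) dvd c"
  shows "chi_qt {0..<c} {{0..<c::nat}} (real q) = c div (q + 1)"
proof -
  define k0 where "k0 = c div (q + 1)"
  have ck: "c = k0 * (q + 1)" using dv unfolding k0_def by (metis dvd_div_mult_self)
  define f where "f = (\<lambda>v::nat. v div (q + 1) + 1)"
  have tail: "q_tailored {0..<c} {{0..<c::nat}} (real q) k0 f"
    unfolding q_tailored_def
  proof (intro conjI ballI)
    fix v assume v: "v \<in> {0..<c}"
    have "v div (q + 1) < k0" using v ck by (simp add: div_less_iff_less_mult)
    then show "f v \<in> {1..k0}" unfolding f_def by auto
    define a where "a = v div (q + 1)"
    have sub: "{w\<in>{0..<c}. f w = f v} \<subseteq> {a * (q + 1)..<a * (q + 1) + (q + 1)}"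
    proof
      fix w assume "w \<in> {w\<in>{0..<c}. f w = f v}"
      then have wa: "w div (q + 1) = a" unfolding f_def a_def by auto
      have "w = w div (q + 1) * (q + 1) + w mod (q + 1)" by (rule div_mult_mod_eq[symmetric])
      moreover have "w mod (q + 1) < q + 1" by simp
      ultimately show "w \<in> {a * (q + 1)..<a * (q + 1) + (q + 1)}" using wa
        by (metis atLeastLessThan_iff add_less_cancel_left le_add1)
    qed
    have "card {w\<in>{0..<c}. f w = f v} \<le> q + 1"
      using card_mono[OF _ sub] by simp
    then have "real (card {w\<in>{0..<c}. f w = f v}) - 1 \<le> real q" by simp
    moreover have "{w\<in>{0..<c}. f w = f v} \<subseteq> {0..<c}" "v \<in> {w\<in>{0..<c}. f w = f v}" using v by auto
    ultimately show "(\<Sum>w\<in>{w\<in>{0..<c}. f w = f v}. \<bar>hadj {{0..<c}} v w\<bar>) \<le> real q * real (hdeg {{0..<c}} v)"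
      using ex_tail_sum[of "{w\<in>{0..<c}. f w = f v}" c v] ex_hdeg[OF v] by simp
  qed
  have "(LEAST k. \<exists>f. q_tailored {0..<c} {{0..<c::nat}} (real q) k f) = k0"
  proof (rule Least_equality)
    show "\<exists>f. q_tailored {0..<c} {{0..<c::nat}} (real q) k0 f" using tail by blast
  next
    fix k assume "\<exists>f. q_tailored {0..<c} {{0..<c::nat}} (real q) k f"
    then have "c \<le> k * (q + 1)" using ex_lower by blast
    then have "k0 * (q + 1) \<le> k * (q + 1)" using ck by simp
    then show "k0 \<le> k" by (metis mult_le_cancel2 zero_less_Suc Suc_eq_plus1)
  qed
  then show ?thesis unfolding chi_qt_def k0_def .
qed

lemma part2:
  assumes c2: "c \<ge> 2" and dv: "(q + 1) dvd c"
  shows "\<exists>(V :: nat set) (E :: nat set set). uniform_hypergraph V E c \<and>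
               real (chi_qt V E (real q)) = (real c - lambda1 V E) / (real q + 1 - lambda1 V E)"
proof (intro exI conjI)
  show "uniform_hypergraph {0..<c} {{0..<c}} c" by (rule ex_uh[OF c2])
  have "real (c div (q + 1)) = real c / real (q + 1)" using dv by (rule real_of_nat_div)
  then show "real (chi_qt {0..<c} {{0..<c}} (real q)) = (real c - lambda1 {0..<c} {{0..<c}}) / (real q + 1 - lambda1 {0..<c} {{0..<c}})"
    unfolding ex_chi[OF c2 dv] ex_lambda1[OF c2] by simp
qed


theorem mainTheorem11:
  shows "(\<forall>(V :: 'a set) (E :: 'a set set) (c :: nat) (q :: real).
            uniform_hypergraph V E c \<and> c \<ge> 2 \<and> 0 \<le> q \<and> q \<le> real c - 1 \<longrightarrow>
            real (chi_qt V E q) \<ge> (real c - lambda1 V E) / (q + 1 - lambda1 V E))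
       \<and> (\<forall>(c :: nat) (q :: nat). c \<ge> 2 \<and> (q + 1) dvd c \<longrightarrow>
            (\<exists>(V :: nat set) (E :: nat set set). uniform_hypergraph V E c \<and>
               real (chi_qt V E (real q)) = (real c - lambda1 V E) / (real q + 1 - lambda1 V E)))"
proof (intro conjI allI impI)
  fix V :: "'a set" and E c and q :: real
  assume "uniform_hypergraph V E c \<and> c \<ge> 2 \<and> 0 \<le> q \<and> q \<le> real c - 1"
  then show "real (chi_qt V E q) \<ge> (real c - lambda1 V E) / (q + 1 - lambda1 V E)"
    using part1 by blast
next
  fix c q :: nat
  assume "c \<ge> 2 \<and> (q + 1) dvd c"
  then show "\<exists>(V :: nat set) (E :: nat set set). uniform_hypergraph V E c \<and>
               real (chi_qt V E (real q)) = (real c - lambda1 V E) / (real q + 1 - lambda1 V E)"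
    using part2 by blast
qed

end
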